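(* There exists a constant $b_N>0$ depending only on $N$ such that for every measurable set $E\subset\mathbb{R}^N$ with $|E|<\infty$ and every $t>0$, $$\|P_t\mathbf 1_E-\mathbf 1_E\|_{L^1}\ \ge\ |E|-\frac{b_N}{V(t/2)}\,e^{-\frac t4\operatorname{tr}B}\,|E|^2.$$
   Context: Let $N\ge 2$. Let $Q,B$ be real constant $N\times N$ matrices with $Q=Q^\star\ge 0$, and assume $K(t)=\frac1t\int_0^t e^{rB}Qe^{rB^\star}\,dr$ is positive definite for every $t>0$. Let $\omega_N$ be the volume of the unit ball, $V(t)=\omega_N(\det(tK(t)))^{1/2}$, $m_t(X,Y)^2=\langle K(t)^{-1}(Y-e^{tB}X),\,Y-e^{tB}X\rangle$, $p(X,Y,t)=(4\pi)^{-N/2}(\det(tK(t)))^{-1/2}\exp\!\big(-m_t(X,Y)^2/(4t)\big)$, and $P_tf(X)=\int_{\mathbb{R}^N}p(X,Y,t)f(Y)\,dY$. $|E|$ is Lebesgue measure, $\mathbf 1_E$ the indicator function. *)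

theory Defs
  imports "HOL-Analysis.Analysis"
begin

primrec mat_pow :: "real^'n^'n \<Rightarrow> nat \<Rightarrow> real^'n^'n" where
  "mat_pow A 0 = mat 1"
| "mat_pow A (Suc k) = A ** mat_pow A k"

definition mat_exp :: "real^'n^'n \<Rightarrow> real^'n^'n" where
  "mat_exp A = (\<Sum>k. (1 / fact k) *\<^sub>R mat_pow A k)"

definition pos_semidef :: "real^'n^'n \<Rightarrow> bool" where
  "pos_semidef A \<longleftrightarrow> (\<forall>x. 0 \<le> x \<bullet> (A *v x))"

definition pos_def :: "real^'n^'n \<Rightarrow> bool" where
  "pos_def A \<longleftrightarrow> (\<forall>x. x \<noteq> 0 \<longrightarrow> 0 < x \<bullet> (A *v x))"

definition Kmat :: "real^'n^'n \<Rightarrow> real^'n^'n \<Rightarrow> real \<Rightarrow> real^'n^'n" where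
  "Kmat Q B t = (1 / t) *\<^sub>R integral {0..t}
      (\<lambda>r. mat_exp (r *\<^sub>R B) ** Q ** mat_exp (r *\<^sub>R transpose B))"

definition omega :: "'n::finite itself \<Rightarrow> real" where
  "omega _ = measure lebesgue (ball (0::real^'n) 1)"

definition Vfun :: "real^'n^'n \<Rightarrow> real^'n^'n \<Rightarrow> real \<Rightarrow> real" where
  "Vfun Q B t = omega TYPE('n) * sqrt (det (t *\<^sub>R Kmat Q B t))"

definition msq :: "real^'n^'n \<Rightarrow> real^'n^'n \<Rightarrow> real \<Rightarrow> real^'n \<Rightarrow> real^'n \<Rightarrow> real" where
  "msq Q B t X Y = (let d = Y - mat_exp (t *\<^sub>R B) *v X in
      (matrix_inv (Kmat Q B t) *v d) \<bullet> d)"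

definition kernel :: "real^'n^'n \<Rightarrow> real^'n^'n \<Rightarrow> real^'n \<Rightarrow> real^'n \<Rightarrow> real \<Rightarrow> real" where
  "kernel Q B X Y t = (4 * pi) powr (- real CARD('n) / 2)
      * (det (t *\<^sub>R Kmat Q B t)) powr (-1/2) * exp (- msq Q B t X Y / (4 * t))"

definition Pt :: "real^'n^'n \<Rightarrow> real^'n^'n \<Rightarrow> real \<Rightarrow> (real^'n \<Rightarrow> real) \<Rightarrow> real^'n \<Rightarrow> real" where
  "Pt Q B t f X = (\<integral>Y. kernel Q B X Y t * f Y \<partial>lebesgue)"

end

theory Submission
  imports Defs
begin


typedef (overloaded) 'n mx = "UNIV :: (real^'n::finite^'n) set" morphisms rep Abs by auto
setup_lifting type_definition_mx

instantiation mx :: (finite) real_vector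
begin
lift_definition zero_mx :: "'a mx" is "0" .
lift_definition plus_mx :: "'a mx \<Rightarrow> 'a mx \<Rightarrow> 'a mx" is "(+)" .
lift_definition minus_mx :: "'a mx \<Rightarrow> 'a mx \<Rightarrow> 'a mx" is "(-)" .
lift_definition uminus_mx :: "'a mx \<Rightarrow> 'a mx" is "uminus" .
lift_definition scaleR_mx :: "real \<Rightarrow> 'a mx \<Rightarrow> 'a mx" is "scaleR" .
instance by standard (transfer, simp add: algebra_simps scaleR_add_right scaleR_add_left)+
end

instantiation mx :: (finite) ring_1
begin
lift_definition one_mx :: "'a mx" is "mat 1" .
lift_definition times_mx :: "'a mx \<Rightarrow> 'a mx \<Rightarrow> 'a mx" is "(**)" .
instance
proof
  fix a b c :: "'a mx"
  show "a * b * c = a * (b * c)" by transfer (simp add: matrix_mul_assoc)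
  show "1 * a = a" by transfer simp
  show "a * 1 = a" by transfer simp
  show "(a + b) * c = a * c + b * c" by transfer (simp add: matrix_matrix_mult_def vec_eq_iff sum.distrib algebra_simps)
  show "a * (b + c) = a * b + a * c" by transfer (simp add: matrix_add_ldistrib)
  show "(0::'a mx) \<noteq> 1" by transfer (simp add: vec_eq_iff mat_def)
qed
end

lemma scaleR_matrix_mul_left: "(r *\<^sub>R A) ** (B::real^'n^'n) = r *\<^sub>R (A ** B)"
  by (simp add: matrix_matrix_mult_def vec_eq_iff sum_distrib_left mult.assoc)
lemma scaleR_matrix_mul_right: "A ** (r *\<^sub>R (B::real^'n^'n)) = r *\<^sub>R (A ** B)"
  by (simp add: matrix_matrix_mult_def vec_eq_iff sum_distrib_left algebra_simps)

instance mx :: (finite) real_algebra_1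
  by standard (transfer, simp add: scaleR_matrix_mul_left scaleR_matrix_mul_right)+

lemma scaleR_mv: "(r *\<^sub>R A) *v (x::real^'n) = r *\<^sub>R (A *v x)"
  by (simp add: matrix_vector_mult_def vec_eq_iff sum_distrib_left mult.assoc)

lemma mv_bl: "bounded_linear (\<lambda>x. (A::real^'n::finite^'m::finite) *v x)"
  by (rule matrix_vector_mul_bounded_linear)

lemma onorm_mv_add: "onorm (\<lambda>v. (x + y) *v v) \<le> onorm (\<lambda>v. (x::real^'n::finite^'m::finite) *v v) + onorm (\<lambda>v. y *v v)"
proof -
  have "onorm (\<lambda>v. x *v v + y *v v) \<le> onorm (\<lambda>v. x *v v) + onorm (\<lambda>v. y *v v)"
    by (rule onorm_triangle[OF mv_bl mv_bl])
  then show ?thesis by (simp add: matrix_vector_mult_add_rdistrib)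
qed

lemma onorm_mv_scale: "onorm (\<lambda>v. (r *\<^sub>R x) *v v) = \<bar>r\<bar> * onorm (\<lambda>v. (x::real^'n::finite^'m::finite) *v v)"
proof -
  have "onorm (\<lambda>v. r *\<^sub>R (x *v v)) = \<bar>r\<bar> * onorm (\<lambda>v. x *v v)"
    by (rule onorm_scaleR[OF mv_bl])
  then show ?thesis by (simp add: scaleR_mv)
qed

lemma onorm_mat1: "onorm (\<lambda>v. mat 1 *v (v::real^'n::finite)) = 1"
proof -
  have "(\<lambda>v. mat 1 *v v) = (\<lambda>v::real^'n. v)" by (rule ext) simp
  then show ?thesis using onorm_id[where 'a="real^'n"] by simp
qed

instantiation mx :: (finite) real_normed_vector
begin
definition norm_mx :: "'a mx \<Rightarrow> real" where "norm_mx A = onorm (\<lambda>x. rep A *v x)"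
definition sgn_mx :: "'a mx \<Rightarrow> 'a mx" where "sgn_mx x = x /\<^sub>R norm x"
definition dist_mx :: "'a mx \<Rightarrow> 'a mx \<Rightarrow> real" where "dist_mx x y = norm (x - y)"
definition uniformity_mx :: "('a mx \<times> 'a mx) filter" where
  "uniformity_mx = (INF e\<in>{0 <..}. principal {(x, y). dist x y < e})"
definition open_mx :: "'a mx set \<Rightarrow> bool" where
  "open_mx U \<longleftrightarrow> (\<forall>x\<in>U. eventually (\<lambda>(x', y). x' = x \<longrightarrow> y \<in> U) uniformity)"
instance
proof
  fix r :: real and x y :: "'a mx"
  show "(norm x = 0) = (x = 0)"
    unfolding norm_mx_def onorm_eq_0[OF mv_bl]
  proof (transfer)
    fix x :: "real^'a^'a"
    show "(\<forall>v. x *v v = 0) = (x = 0)"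
      using matrix_eq[of x 0] by simp
  qed
  show "norm (x + y) \<le> norm x + norm y"
    unfolding norm_mx_def by transfer (rule onorm_mv_add)
  show "norm (scaleR r x) = \<bar>r\<bar> * norm x"
    unfolding norm_mx_def by transfer (rule onorm_mv_scale)
qed (rule sgn_mx_def dist_mx_def open_mx_def uniformity_mx_def)+
end

instance mx :: (finite) real_normed_algebra_1
proof
  fix x y :: "'a mx"
  show "norm (x * y) \<le> norm x * norm y"
    unfolding norm_mx_def
  proof transfer
    fix x y :: "real^'a^'a"
    have "onorm ((\<lambda>v. x *v v) \<circ> (\<lambda>v. y *v v)) \<le> onorm (\<lambda>v. x *v v) * onorm (\<lambda>v. y *v v)"
      by (rule onorm_compose[OF mv_bl mv_bl])
    then show "onorm (\<lambda>v. (x ** y) *v v) \<le> onorm (\<lambda>v. x *v v) * onorm (\<lambda>v. y *v v)"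
      by (simp add: o_def matrix_vector_mul_assoc)
  qed
  show "norm (1::'a mx) = 1"
    unfolding norm_mx_def
    by transfer (rule onorm_mat1)
qed

lemma sum_abs_le_norm_rep: "(\<Sum>i\<in>UNIV. \<Sum>j\<in>UNIV. \<bar>rep A $ i $ j\<bar>) \<le> real CARD('n::finite) * real CARD('n) * norm (A::'n mx)"
proof -
  have "(\<Sum>i\<in>UNIV. \<Sum>j\<in>UNIV. \<bar>rep A $ i $ j\<bar>) \<le> (\<Sum>i\<in>(UNIV::'n set). \<Sum>j\<in>(UNIV::'n set). norm A)"
    by (intro sum_mono) (simp add: norm_mx_def matrix_component_le_onorm)
  then show ?thesis by simp
qed

lemma norm_rep_le: "norm (rep (A::'n::finite mx)) \<le> real CARD('n) * real CARD('n) * norm A"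
proof -
  have "norm (rep A) \<le> (\<Sum>i\<in>UNIV. norm (rep A $ i))" unfolding norm_vec_def by (rule L2_set_le_sum) simp
  also have "\<dots> \<le> (\<Sum>i\<in>UNIV. \<Sum>j\<in>UNIV. \<bar>rep A $ i $ j\<bar>)"
    by (intro sum_mono norm_le_l1_cart)
  also have "\<dots> \<le> real CARD('n) * real CARD('n) * norm A" by (rule sum_abs_le_norm_rep)
  finally show ?thesis .
qed

lemma norm_Abs_le: "norm (Abs X :: 'n::finite mx) \<le> real CARD('n) * real CARD('n) * norm X"
proof -
  have "norm (Abs X :: 'n mx) \<le> (\<Sum>i\<in>UNIV. \<Sum>j\<in>UNIV. \<bar>X $ i $ j\<bar>)"
    unfolding norm_mx_def using onorm_le_matrix_component_sum[of X] by (simp add: Abs_inverse)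
  also have "\<dots> \<le> (\<Sum>i\<in>(UNIV::'n set). \<Sum>j\<in>(UNIV::'n set). norm X)"
    by (intro sum_mono) (rule order_trans[OF component_le_norm_cart Finite_Cartesian_Product.norm_nth_le])
  finally show ?thesis by simp
qed

lemma bl_rep: "bounded_linear (rep :: 'n::finite mx \<Rightarrow> _)"
  apply (rule bounded_linear_intro[where K="real CARD('n) * real CARD('n)"])
    apply (simp add: plus_mx.rep_eq)
   apply (simp add: scaleR_mx.rep_eq)
  by (metis norm_rep_le mult.commute)

lemma bl_Abs: "bounded_linear (Abs :: _ \<Rightarrow> 'n::finite mx)"
  apply (rule bounded_linear_intro[where K="real CARD('n) * real CARD('n)"])
    apply (simp add: plus_mx.abs_eq)
   apply (simp add: scaleR_mx.abs_eq)
  by (metis norm_Abs_le mult.commute)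

instance mx :: (finite) banach
proof
  fix X :: "nat \<Rightarrow> 'a mx"
  assume "Cauchy X"
  then have "Cauchy (\<lambda>n. rep (X n))" by (rule bounded_linear.Cauchy[OF bl_rep])
  then obtain L where "(\<lambda>n. rep (X n)) \<longlonglongrightarrow> L" using Cauchy_convergent_iff convergent_def by blast
  then have "(\<lambda>n. Abs (rep (X n))) \<longlonglongrightarrow> (Abs L :: 'a mx)" by (rule bounded_linear.tendsto[OF bl_Abs])
  then show "convergent X" by (simp add: rep_inverse convergent_def) blast
qed



lemma rep_one: "rep (1::'n::finite mx) = mat 1" by transfer simp
lemma rep_times: "rep (X * Y) = rep X ** rep (Y::'n::finite mx)" by transfer simp
lemma rep_scaleR: "rep (r *\<^sub>R X) = r *\<^sub>R rep (X::'n::finite mx)" by transfer simp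
lemma rep_power: "rep (X ^ k) = mat_pow (rep (X::'n::finite mx)) k"
  by (induction k) (simp_all add: rep_one rep_times)
lemma rep_Abs[simp]: "rep (Abs A) = A" by (simp add: Abs_inverse)

lemma mat_exp_rep: "mat_exp A = rep (exp (Abs A :: 'n::finite mx))"
proof -
  have "rep (exp (Abs A :: 'n mx)) = (\<Sum>k. rep ((Abs A :: 'n mx) ^ k /\<^sub>R fact k))"
    unfolding exp_def by (rule bounded_linear.suminf[OF bl_rep summable_exp_generic])
  also have "\<dots> = (\<Sum>k. (1 / fact k) *\<^sub>R mat_pow A k)"
    by (simp add: rep_scaleR rep_power divide_inverse)
  finally show ?thesis by (simp add: mat_exp_def)
qed

lemma mat_exp_summable: "summable (\<lambda>k. (1 / fact k) *\<^sub>R mat_pow (A::real^'n::finite^'n) k)"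
proof -
  have "summable (\<lambda>k. rep ((Abs A :: 'n mx) ^ k /\<^sub>R fact k))"
    by (rule bounded_linear.summable[OF bl_rep summable_exp_generic])
  then show ?thesis by (simp add: rep_scaleR rep_power divide_inverse)
qed

lemma Abs_times: "Abs (A ** B) = (Abs A * Abs B :: 'n::finite mx)"
  by (metis rep_Abs rep_inverse rep_times)
lemma Abs_plus: "Abs (A + B) = (Abs A + Abs B :: 'n::finite mx)"
  by (simp add: plus_mx.abs_eq)
lemma Abs_scaleR: "Abs (r *\<^sub>R A) = (r *\<^sub>R Abs A :: 'n::finite mx)"
  by (simp add: scaleR_mx.abs_eq)

lemma mat_exp_add: "A ** B = B ** A \<Longrightarrow> mat_exp (A + B) = mat_exp A ** mat_exp (B::real^'n::finite^'n)"
  unfolding mat_exp_rep Abs_plus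
  by (subst exp_add_commuting) (simp_all add: rep_times flip: Abs_times)

lemma mat_exp_zero: "mat_exp (0::real^'n::finite^'n) = mat 1"
proof -
  have "(Abs 0 :: 'n mx) = 0" by (simp add: zero_mx.abs_eq)
  then show ?thesis by (simp add: mat_exp_rep rep_one)
qed

lemma mat_pow_Suc': "mat_pow A (Suc k) = mat_pow A k ** (A::real^'n::finite^'n)"
proof -
  have "rep ((Abs A:: 'n mx) ^ Suc k) = rep ((Abs A :: 'n mx) ^ k * Abs A)"
    by (simp add: power_commutes)
  then show ?thesis by (simp add: rep_power rep_times del: power_Suc)
qed

lemma transpose_mat_pow: "transpose (mat_pow A k) = mat_pow (transpose (A::real^'n::finite^'n)) k"
proof (induction k)
  case (Suc k)
  have "transpose (mat_pow A (Suc k)) = transpose (mat_pow A k ** A)" by (simp only: mat_pow_Suc')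
  also have "\<dots> = transpose A ** mat_pow (transpose A) k" by (simp add: matrix_transpose_mul Suc)
  finally show ?case by simp
qed (simp add: transpose_mat)

lemma bl_transpose: "bounded_linear (transpose :: real^'n::finite^'m::finite \<Rightarrow> _)"
  unfolding linear_conv_bounded_linear[symmetric] by (auto simp: linear_iff transpose_def vec_eq_iff)

lemma transpose_scaleR: "transpose (r *\<^sub>R A) = r *\<^sub>R transpose (A::real^'n::finite^'m::finite)"
  by (simp add: transpose_def vec_eq_iff)

lemma transpose_mat_exp: "transpose (mat_exp A) = mat_exp (transpose (A::real^'n::finite^'n))"
  unfolding mat_exp_def
  by (subst bounded_linear.suminf[OF bl_transpose mat_exp_summable])
     (simp add: transpose_mat_pow transpose_scaleR)

lemma mat_exp_shift: "mat_exp ((s + h) *\<^sub>R B) = mat_exp (s *\<^sub>R B) ** mat_exp (h *\<^sub>R (B::real^'n::finite^'n))"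
  by (simp add: scaleR_add_left mat_exp_add scaleR_matrix_mul_left scaleR_matrix_mul_right)

lemma mat_exp_entry_deriv:
  fixes B :: "real^'n::finite^'n"
  shows   "((\<lambda>s. mat_exp (s *\<^sub>R B) $ i $ j) has_real_derivative (mat_exp (s *\<^sub>R B) ** B) $ i $ j) (at s)"
proof -
  let ?X = "Abs B :: 'n mx"
  have bl: "bounded_linear (\<lambda>M::'n mx. rep M $ i $ j)"
    using bounded_linear_compose[OF bounded_linear_vec_nth[of j] bounded_linear_compose[OF bounded_linear_vec_nth[of i] bl_rep]]
    by (simp add: o_def)
  have "((\<lambda>t. exp (t *\<^sub>R ?X)) has_vector_derivative exp (s *\<^sub>R ?X) * ?X) (at s)"
    by (rule exp_scaleR_has_vector_derivative_right)
  from bounded_linear.has_vector_derivative[OF bl this]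
  have "((\<lambda>t. rep (exp (t *\<^sub>R ?X)) $ i $ j) has_vector_derivative rep (exp (s *\<^sub>R ?X) * ?X) $ i $ j) (at s)" .
  then show ?thesis
    by (simp add: has_real_derivative_iff_has_vector_derivative mat_exp_rep Abs_scaleR rep_times)
qed



lemma perm_term:
  fixes B :: "real^'n::finite^'n"
  assumes p: "p permutes (UNIV::'n set)"
  shows "(\<Sum>i\<in>UNIV. B $ i $ p i * (\<Prod>j\<in>UNIV - {i}. (mat 1 :: real^'n^'n) $ j $ p j))
         = (if p = id then trace B else 0)"
proof (cases "p = id")
  case True
  then show ?thesis by (simp add: trace_def mat_def)
next
  case False
  have "B $ i $ p i * (\<Prod>j\<in>UNIV - {i}. (mat 1 :: real^'n^'n) $ j $ p j) = 0" for i
  proof (rule ccontr)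
    assume "B $ i $ p i * (\<Prod>j\<in>UNIV - {i}. (mat 1 :: real^'n^'n) $ j $ p j) \<noteq> 0"
    then have "(\<Prod>j\<in>UNIV - {i}. (mat 1 :: real^'n^'n) $ j $ p j) \<noteq> 0" by auto
    then have fix_: "\<forall>j\<in>UNIV - {i}. p j = j"
      by (auto simp: mat_def prod_zero_iff split: if_splits)
    have "p i = i"
    proof (rule ccontr)
      assume ne: "p i \<noteq> i"
      then have "p (p i) = p i" using fix_ by auto
      then have "p i = i" using permutes_inj[OF p] by (auto dest: injD)
      with ne show False by simp
    qed
    with fix_ have "p = id" by (auto simp: fun_eq_iff)
    with False show False by simp
  qed
  then have "(\<Sum>i\<in>UNIV. B $ i $ p i * (\<Prod>j\<in>UNIV - {i}. (mat 1 :: real^'n^'n) $ j $ p j)) = 0"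
    by (intro sum.neutral) blast
  then show ?thesis using False by simp
qed

lemma det_exp_deriv0:
  fixes B :: "real^'n::finite^'n"
  shows "((\<lambda>h. det (mat_exp (h *\<^sub>R B))) has_real_derivative trace B) (at 0)"
proof -
  let ?P = "{p. p permutes (UNIV::'n set)}"
  have d: "((\<lambda>h. of_int (sign p) * (\<Prod>i\<in>UNIV. mat_exp (h *\<^sub>R B) $ i $ p i)) has_real_derivative
      of_int (sign p) * (\<Sum>i\<in>UNIV. B $ i $ p i * (\<Prod>j\<in>UNIV - {i}. (mat 1 :: real^'n^'n) $ j $ p j))) (at 0)" for p
  proof -
    have "((\<lambda>h. \<Prod>i\<in>UNIV. mat_exp (h *\<^sub>R B) $ i $ p i) has_real_derivative
       (\<Sum>i\<in>UNIV. (mat_exp (0 *\<^sub>R B) ** B) $ i $ p i * (\<Prod>j\<in>UNIV - {i}. mat_exp (0 *\<^sub>R B) $ j $ p j))) (at 0)"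
      by (rule has_field_derivative_prod) (rule mat_exp_entry_deriv)
    then show ?thesis by (intro DERIV_cmult) (simp add: mat_exp_zero)
  qed
  have "((\<lambda>h. \<Sum>p\<in>?P. of_int (sign p) * (\<Prod>i\<in>UNIV. mat_exp (h *\<^sub>R B) $ i $ p i)) has_real_derivative
      (\<Sum>p\<in>?P. of_int (sign p) * (\<Sum>i\<in>UNIV. B $ i $ p i * (\<Prod>j\<in>UNIV - {i}. (mat 1 :: real^'n^'n) $ j $ p j)))) (at 0)"
    by (rule DERIV_sum) (rule d)
  also have "(\<Sum>p\<in>?P. of_int (sign p) * (\<Sum>i\<in>UNIV. B $ i $ p i * (\<Prod>j\<in>UNIV - {i}. (mat 1 :: real^'n^'n) $ j $ p j)))
     = (\<Sum>p\<in>?P. if p = id then trace B else 0)"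
    by (intro sum.cong refl) (auto simp: perm_term)
  also have "\<dots> = trace B" by (simp add: sum.delta')
  finally show ?thesis unfolding det_def .
qed

lemma det_mat_exp: "det (mat_exp (s *\<^sub>R B)) = exp (s * trace (B::real^'n::finite^'n))"
proof -
  define g where "g h = det (mat_exp (h *\<^sub>R B))" for h
  have g0: "g 0 = 1" by (simp add: g_def mat_exp_zero)
  have gd: "(g has_real_derivative g x * trace B) (at x)" for x
  proof -
    have "((\<lambda>h. g x * g h) has_real_derivative g x * trace B) (at 0)"
      unfolding g_def by (intro DERIV_cmult det_exp_deriv0)
    moreover have "(\<lambda>h. g x * g h) = (\<lambda>h. g (h + x))"
      by (rule ext) (simp add: g_def mat_exp_shift det_mul add.commute)
    ultimately have "((\<lambda>h. g (h + x)) has_real_derivative g x * trace B) (at 0)" by simp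
    then show ?thesis using DERIV_shift[of g "g x * trace B" 0 x] by (simp only: add_0_left)
  qed
  define f where "f h = g h * exp (- h * trace B)" for h
  have "(f has_real_derivative 0) (at x)" for x
  proof -
    have e: "((\<lambda>h. exp (- h * trace B)) has_real_derivative exp (- x * trace B) * (- trace B)) (at x)"
      by (auto intro!: derivative_eq_intros)
    from DERIV_mult[OF gd e] show ?thesis unfolding f_def by (simp add: algebra_simps)
  qed
  then have "f s = f 0" by (intro DERIV_isconst_all) auto
  then have "g s * exp (- s * trace B) = 1" by (simp add: f_def g0)
  then have "g s = exp (s * trace B)"
    by (simp add: exp_minus field_simps)
  then show ?thesis by (simp add: g_def)
qed



lemma inner_mv: "x \<bullet> ((M::real^'n::finite^'m::finite) *v y) = (transpose M *v x) \<bullet> y"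
  by (simp add: inner_vec_def matrix_vector_mult_def transpose_def sum_distrib_left sum_distrib_right
      mult_ac sum.swap[of _ "UNIV::'m set"])

lemma sym_inner: "transpose A = A \<Longrightarrow> x \<bullet> ((A::real^'n::finite^'n) *v y) = (A *v x) \<bullet> y"
  by (metis inner_mv)

lemma eig_exists:
  fixes A :: "real^'n::finite^'n"
  assumes sym: "transpose A = A" and W: "subspace W" and inv: "\<And>x. x \<in> W \<Longrightarrow> A *v x \<in> W"
    and ne: "w \<in> W" "w \<noteq> 0"
  shows "\<exists>v\<in>W. norm v = 1 \<and> (\<exists>c. A *v v = c *\<^sub>R v)"
proof -
  let ?S = "W \<inter> sphere 0 1"
  let ?q = "\<lambda>x. x \<bullet> (A *v x)"
  have "compact ?S" by (intro closed_Int_compact closed_subspace W compact_sphere)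
  moreover have "w /\<^sub>R norm w \<in> ?S" using ne W by (simp add: subspace_scale)
  then have "?S \<noteq> {}" by blast
  moreover have "continuous_on ?S ?q"
    by (intro continuous_intros linear_continuous_on matrix_vector_mul_bounded_linear)
  ultimately obtain v where v: "v \<in> ?S" and vmax: "\<And>y. y \<in> ?S \<Longrightarrow> ?q y \<le> ?q v"
    using continuous_attains_sup[of ?S ?q] by blast
  define c where "c = ?q v"
  have vW: "v \<in> W" and nv: "norm v = 1" using v by auto
  have vv: "v \<bullet> v = 1" using nv by (simp add: norm_eq_1)
  have bound: "?q x \<le> c * (x \<bullet> x)" if "x \<in> W" for x
  proof (cases "x = 0")
    case False
    have "x /\<^sub>R norm x \<in> ?S" using False that W by (simp add: subspace_scale)
    then have "?q (x /\<^sub>R norm x) \<le> c" unfolding c_def by (rule vmax)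
    then have "?q x / (norm x)^2 \<le> c"
      by (simp add: matrix_vector_mult_scaleR power2_eq_square divide_inverse mult_ac)
    then show ?thesis using False by (simp add: divide_le_eq power2_norm_eq_inner mult_ac)
  qed simp
  have orth: "v \<bullet> (A *v w') = 0" if w'W: "w' \<in> W" and o: "w' \<bullet> v = 0" for w'
  proof (rule ccontr)
    define a where "a = v \<bullet> (A *v w')"
    define b where "b = ?q w' - c * (w' \<bullet> w')"
    assume "v \<bullet> (A *v w') \<noteq> 0"
    then have a0: "a \<noteq> 0" by (simp add: a_def)
    have key: "2 * e * a + e^2 * b \<le> 0" for e
    proof -
      have "v + e *\<^sub>R w' \<in> W" using vW w'W W by (simp add: subspace_add subspace_scale)
      from bound[OF this]
      have 1: "?q (v + e *\<^sub>R w') \<le> c * ((v + e *\<^sub>R w') \<bullet> (v + e *\<^sub>R w'))" .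
      have 2: "?q (v + e *\<^sub>R w') = c + 2 * e * a + e^2 * ?q w'"
        using sym_inner[OF sym, of w' v]
        by (simp add: c_def a_def matrix_vector_right_distrib matrix_vector_mult_scaleR inner_add_left
            inner_add_right power2_eq_square algebra_simps inner_commute)
      have 3: "(v + e *\<^sub>R w') \<bullet> (v + e *\<^sub>R w') = 1 + e^2 * (w' \<bullet> w')"
        using vv o by (simp add: inner_add_left inner_add_right power2_eq_square inner_commute)
      have "c + 2 * e * a + e^2 * ?q w' \<le> c * (1 + e^2 * (w' \<bullet> w'))"
        using 1 unfolding 2 3 .
      then show ?thesis by (simp add: b_def algebra_simps)
    qed
    define e where "e = a / (\<bar>b\<bar> + 1)"
    have "2 * e * a + e^2 * b = (a^2 / (\<bar>b\<bar> + 1)^2) * (2 * (\<bar>b\<bar> + 1) + b)"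
    proof -
      have gen: "d \<noteq> 0 \<Longrightarrow> 2 * (a / d) * a + (a / d)^2 * b = (a^2 / d^2) * (2 * d + b)" for d :: real
        by (simp add: power2_eq_square field_simps)
      have pb: "\<bar>b\<bar> + 1 \<noteq> 0" by linarith
      show ?thesis unfolding e_def using gen[OF pb] .
    qed
    moreover have "a^2 / (\<bar>b\<bar> + 1)^2 > 0" using a0 by simp
    moreover have "2 * (\<bar>b\<bar> + 1) + b > 0" by (simp add: abs_if)
    ultimately have "2 * e * a + e^2 * b > 0" by (metis mult_pos_pos)
    with key[of e] show False by simp
  qed
  define u where "u = A *v v - c *\<^sub>R v"
  have uW: "u \<in> W" unfolding u_def using inv[OF vW] vW W by (simp add: subspace_diff subspace_scale)
  have uv: "u \<bullet> v = 0" unfolding u_def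
    using vv by (simp add: c_def inner_diff_left inner_diff_right inner_commute)
  have "v \<bullet> (A *v u) = 0" by (rule orth[OF uW uv])
  then have "(A *v v) \<bullet> u = 0" using sym_inner[OF sym, of v u] by simp
  then have "u \<bullet> u = 0" using uv unfolding u_def
    by (simp add: inner_diff_left inner_diff_right inner_commute algebra_simps)
  then have "A *v v = c *\<^sub>R v" by (simp add: u_def)
  then show ?thesis using vW nv by blast
qed

lemma eigbasis:
  fixes A :: "real^'n::finite^'n"
  assumes sym: "transpose A = A"
  shows "k \<le> CARD('n) \<Longrightarrow> \<exists>S. finite S \<and> card S = k \<and> (\<forall>s\<in>S. norm s = 1 \<and> (\<exists>c. A *v s = c *\<^sub>R s))
      \<and> (\<forall>s\<in>S. \<forall>s'\<in>S. s \<noteq> s' \<longrightarrow> s \<bullet> s' = 0)"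
proof (induction k)
  case 0
  then show ?case by (intro exI[of _ "{}"]) auto
next
  case (Suc k)
  then obtain S where S: "finite S" "card S = k" "\<forall>s\<in>S. norm s = 1 \<and> (\<exists>c. A *v s = c *\<^sub>R s)"
    "\<forall>s\<in>S. \<forall>s'\<in>S. s \<noteq> s' \<longrightarrow> s \<bullet> s' = 0" by auto
  define W where "W = {x. \<forall>s\<in>S. s \<bullet> x = 0}"
  have W: "subspace W" unfolding W_def subspace_def by (auto simp: inner_add_right)
  have inv: "A *v x \<in> W" if "x \<in> W" for x
  proof -
    have "s \<bullet> (A *v x) = 0" if "s \<in> S" for s
    proof -
      obtain c where "A *v s = c *\<^sub>R s" using S(3) \<open>s \<in> S\<close> by blast
      then show ?thesis using sym_inner[OF sym, of s x] \<open>x \<in> W\<close> \<open>s \<in> S\<close> by (simp add: W_def)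
    qed
    then show ?thesis by (simp add: W_def)
  qed
  have "dim S < DIM(real^'n)"
    using dim_le_card[OF span_superset S(1)] S(2) Suc.prems by simp
  then obtain x where x: "x \<noteq> 0" "\<And>y. y \<in> span S \<Longrightarrow> orthogonal x y"
    using orthogonal_to_subspace_exists by blast
  have "x \<in> W" using x(2)[OF span_base] by (auto simp: W_def orthogonal_def inner_commute)
  from eig_exists[OF sym W inv this x(1)]
  obtain v where v: "v \<in> W" "norm v = 1" "\<exists>c. A *v v = c *\<^sub>R v" by blast
  have vv: "v \<bullet> v = 1" using v(2) by (simp add: norm_eq_1)
  have "v \<notin> S" using v(1) vv by (auto simp: W_def)
  show ?case
    apply (rule exI[of _ "insert v S"])
    using S v vv \<open>v \<notin> S\<close> by (auto simp: W_def inner_commute)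
qed

definition "colmat (f::'n::finite \<Rightarrow> real^'n) = (\<chi> i j. f j $ i)"

lemma column_colmat: "column j (colmat f) = f j"
  by (simp add: colmat_def column_def vec_eq_iff)

lemma column_mult: "column j (A ** B) = A *v column j (B::real^'n::finite^'n)"
  by (simp add: column_def vec_eq_iff matrix_matrix_mult_def matrix_vector_mult_def)

lemma transpose_mult_entry: "(transpose M ** N) $ i $ j = column i M \<bullet> column j (N::real^'n::finite^'n)"
  by (simp add: matrix_matrix_mult_def transpose_def column_def inner_vec_def)

lemma spectral:
  fixes A :: "real^'n::finite^'n"
  assumes sym: "transpose A = A"
  shows "\<exists>V. orthogonal_matrix V \<and> (\<forall>i j. i \<noteq> j \<longrightarrow> (transpose V ** A ** V) $ i $ j = 0)"
proof -
  obtain S where S: "finite S" "card S = CARD('n)" "\<forall>s\<in>S. norm s = 1 \<and> (\<exists>c. A *v s = c *\<^sub>R s)"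
    "\<forall>s\<in>S. \<forall>s'\<in>S. s \<noteq> s' \<longrightarrow> s \<bullet> s' = 0" using eigbasis[OF sym order_refl] by blast
  obtain f where f: "bij_betw f (UNIV::'n set) S"
    using finite_same_card_bij[of "UNIV::'n set" S] S by auto
  have fS: "f i \<in> S" for i using f by (auto simp: bij_betw_def)
  have finj: "f i \<noteq> f j" if "i \<noteq> j" for i j using f that by (auto simp: bij_betw_def inj_on_def)
  define V where "V = colmat f"
  have "orthogonal_matrix V"
    unfolding orthogonal_matrix_orthonormal_columns V_def column_colmat orthogonal_def
    using S fS finj by auto
  moreover have "(transpose V ** A ** V) $ i $ j = 0" if "i \<noteq> j" for i j
  proof -
    obtain c where c: "A *v f j = c *\<^sub>R f j" using S(3) fS by blast
    have "(transpose V ** A ** V) $ i $ j = f i \<bullet> (A *v f j)"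
      by (simp add: matrix_mul_assoc[symmetric] transpose_mult_entry column_mult V_def column_colmat)
    also have "\<dots> = 0" using c S(4) fS finj[OF that] by simp
    finally show ?thesis .
  qed
  ultimately show ?thesis by blast
qed



lemma matrix_add_rdistrib': "(A + B) ** (C::real^'n::finite^'n) = A ** C + B ** C"
  by (simp add: matrix_matrix_mult_def vec_eq_iff sum.distrib algebra_simps)

lemma det_conj_orth: "orthogonal_matrix V \<Longrightarrow> det (transpose V ** A ** V) = det (A::real^'n::finite^'n)"
proof -
  assume o: "orthogonal_matrix V"
  then have "det V * det V = 1" using det_orthogonal_matrix[OF o] by auto
  then show ?thesis by (simp add: det_mul)
qed

lemma diag_entry: "(transpose V ** A ** V) $ i $ i = column i V \<bullet> (A *v column i (V::real^'n::finite^'n))"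
  by (simp add: matrix_mul_assoc[symmetric] transpose_mult_entry column_mult)

lemma orth_col_ne0: "orthogonal_matrix V \<Longrightarrow> column i (V::real^'n::finite^'n) \<noteq> 0"
  using orthogonal_matrix_orthonormal_columns[of V] by (metis norm_zero zero_neq_one)

lemma det_pos:
  fixes A :: "real^'n::finite^'n"
  assumes "transpose A = A" "pos_def A"
  shows "det A > 0"
proof -
  obtain V where V: "orthogonal_matrix V" "\<forall>i j. i \<noteq> j \<longrightarrow> (transpose V ** A ** V) $ i $ j = 0"
    using spectral[OF assms(1)] by blast
  have "det A = det (transpose V ** A ** V)" using det_conj_orth[OF V(1)] by simp
  also have "\<dots> = (\<Prod>i\<in>UNIV. (transpose V ** A ** V) $ i $ i)" using V(2) by (intro det_diagonal) auto
  also have "\<dots> > 0"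
    using assms(2) orth_col_ne0[OF V(1)] by (intro prod_pos) (simp add: diag_entry pos_def_def)
  finally show ?thesis .
qed

lemma det_I_plus:
  fixes C :: "real^'n::finite^'n"
  assumes "transpose C = C" "pos_semidef C"
  shows "1 \<le> det (mat 1 + C)"
proof -
  obtain V where V: "orthogonal_matrix V" "\<forall>i j. i \<noteq> j \<longrightarrow> (transpose V ** C ** V) $ i $ j = 0"
    using spectral[OF assms(1)] by blast
  have eq: "transpose V ** (mat 1 + C) ** V = mat 1 + transpose V ** C ** V"
    using V(1) by (simp add: matrix_add_ldistrib matrix_add_rdistrib' orthogonal_matrix_def)
  have "det (mat 1 + C) = det (transpose V ** (mat 1 + C) ** V)" using det_conj_orth[OF V(1)] by simp
  also have "\<dots> = (\<Prod>i\<in>UNIV. (mat 1 + transpose V ** C ** V) $ i $ i)"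
    unfolding eq using V(2) by (intro det_diagonal) (auto simp: mat_def)
  also have "\<dots> \<ge> 1"
    using assms(2) by (intro prod_ge_1) (simp add: diag_entry pos_semidef_def mat_def)
  finally show ?thesis .
qed

lemma diag_mult:
  "((\<chi> i j. if i = j then a i else 0) ** (\<chi> i j. if i = j then b i else 0) :: real^'n::finite^'n)
    = (\<chi> i j. if i = j then a i * b i else 0)"
proof -
  have "(\<Sum>k\<in>UNIV. (if i = k then a i else 0) * (if k = j then b k else 0)) = (if i = j then a i * b i else (0::real))" for i j :: 'n
  proof -
    have "(\<Sum>k\<in>UNIV. (if i = k then a i else 0) * (if k = j then b k else 0))
        = (\<Sum>k\<in>UNIV. if k = i then a i * (if i = j then b i else 0) else (0::real))"
      by (rule sum.cong) auto
    also have "\<dots> = a i * (if i = j then b i else 0)" by (simp only: sum.delta finite UNIV_I if_True)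
    finally show ?thesis by simp
  qed
  then show ?thesis by (simp add: matrix_matrix_mult_def vec_eq_iff)
qed

lemma diag_transpose: "transpose ((\<chi> i j. if i = j then a i else 0) :: real^'n::finite^'n) = (\<chi> i j. if i = j then a i else 0)"
  by (simp add: transpose_def vec_eq_iff)

lemma det_mono:
  fixes A P :: "real^'n::finite^'n"
  assumes symA: "transpose A = A" and pdA: "pos_def A" and symP: "transpose P = P" and psdP: "pos_semidef P"
  shows "det A \<le> det (A + P)"
proof -
  obtain V where V: "orthogonal_matrix V" "\<forall>i j. i \<noteq> j \<longrightarrow> (transpose V ** A ** V) $ i $ j = 0"
    using spectral[OF symA] by blast
  define D where "D = transpose V ** A ** V"
  define d where "d i = D $ i $ i" for i
  have dpos: "d i > 0" for i
    using pdA orth_col_ne0[OF V(1)] by (simp add: d_def D_def diag_entry pos_def_def)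
  have Doff: "i \<noteq> j \<Longrightarrow> D $ i $ j = 0" for i j using V(2) by (simp add: D_def)
  define S where "S = ((\<chi> i j. if i = j then sqrt (d i) else 0) :: real^'n^'n)"
  define Si where "Si = ((\<chi> i j. if i = j then 1 / sqrt (d i) else 0) :: real^'n^'n)"
  have SS: "S ** S = D"
  proof -
    have "S ** S = ((\<chi> i j. if i = j then sqrt (d i) * sqrt (d i) else 0) :: real^'n^'n)"
      unfolding S_def by (rule diag_mult)
    also have "\<dots> = D"
    proof -
      have "(if i = j then sqrt (d i) * sqrt (d i) else 0) = D $ i $ j" for i j
        using dpos[of i] Doff[of i j] by (cases "i = j") (simp_all add: d_def)
      then show ?thesis by (simp add: vec_eq_iff)
    qed
    finally show ?thesis .
  qed
  have SiS: "Si ** S = mat 1"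
  proof -
    have "Si ** S = ((\<chi> i j. if i = j then 1 / sqrt (d i) * sqrt (d i) else 0) :: real^'n^'n)"
      unfolding S_def Si_def by (rule diag_mult)
    also have "\<dots> = mat 1"
    proof -
      have "(if i = j then 1 / sqrt (d i) * sqrt (d i) else 0) = (mat 1 :: real^'n^'n) $ i $ j" for i j
        using dpos[of i] by (cases "i = j") (simp_all add: mat_def)
      then show ?thesis by (simp add: vec_eq_iff)
    qed
    finally show ?thesis .
  qed
  have St: "transpose S = S" unfolding S_def by (rule diag_transpose)
  have VV: "transpose V ** V = mat 1" "V ** transpose V = mat 1" using V(1) by (auto simp: orthogonal_matrix_def)
  define R where "R = V ** S"
  define Ri where "Ri = Si ** transpose V"
  have A_eq: "A = V ** D ** transpose V"
  proof -
    have "V ** D ** transpose V = (V ** transpose V) ** A ** (V ** transpose V)"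
      by (simp add: D_def matrix_mul_assoc)
    then show ?thesis using VV by simp
  qed
  have RRt: "R ** transpose R = A"
  proof -
    have "R ** transpose R = V ** (S ** S) ** transpose V"
      by (simp add: R_def matrix_transpose_mul St matrix_mul_assoc)
    then show ?thesis using SS A_eq by simp
  qed
  have RiR: "Ri ** R = mat 1"
  proof -
    have "Ri ** R = Si ** (transpose V ** V) ** S" by (simp add: R_def Ri_def matrix_mul_assoc)
    then show ?thesis using VV SiS by simp
  qed
  then have RRi: "R ** Ri = mat 1" using matrix_left_right_inverse by blast
  have RRit: "transpose Ri ** transpose R = mat 1"
    using RRi by (metis matrix_transpose_mul transpose_mat)
  define C where "C = Ri ** P ** transpose Ri"
  have AP: "A + P = R ** (mat 1 + C) ** transpose R"
  proof -
    have "R ** C ** transpose R = (R ** Ri) ** P ** (transpose Ri ** transpose R)"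
      by (simp add: C_def matrix_mul_assoc)
    then have "R ** C ** transpose R = P" using RRi RRit by simp
    then show ?thesis using RRt by (simp add: matrix_add_ldistrib matrix_add_rdistrib')
  qed
  have symC: "transpose C = C"
    by (simp add: C_def matrix_transpose_mul symP matrix_mul_assoc)
  have psdC: "pos_semidef C"
    unfolding pos_semidef_def
  proof
    fix x
    have "x \<bullet> (C *v x) = (transpose Ri *v x) \<bullet> (P *v (transpose Ri *v x))"
      by (simp add: C_def matrix_vector_mul_assoc[symmetric] inner_mv)
    then show "0 \<le> x \<bullet> (C *v x)" using psdP by (simp add: pos_semidef_def)
  qed
  have dA: "det A = det R * det R" using RRt by (metis det_mul det_transpose)
  have "det (A + P) = det R * det (mat 1 + C) * det R" unfolding AP by (simp add: det_mul)
  also have "\<dots> = det (mat 1 + C) * det A" using dA by simp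
  finally have "det (A + P) = det (mat 1 + C) * det A" .
  moreover have "det A \<ge> 0" using dA by simp
  moreover have "1 \<le> det (mat 1 + C)" by (rule det_I_plus[OF symC psdC])
  ultimately show ?thesis by (metis mult_right_mono mult_1)
qed



definition Fm :: "real^'n::finite^'n \<Rightarrow> real^'n^'n \<Rightarrow> real \<Rightarrow> real^'n^'n" where
  "Fm Q B r = mat_exp (r *\<^sub>R B) ** Q ** mat_exp (r *\<^sub>R transpose B)"

definition Mm :: "real^'n::finite^'n \<Rightarrow> real^'n^'n \<Rightarrow> real \<Rightarrow> real^'n^'n" where
  "Mm Q B t = integral {0..t} (Fm Q B)"

lemma Kmat_Mm: "Kmat Q B t = (1 / t) *\<^sub>R Mm Q B t"
  unfolding Kmat_def Mm_def Fm_def ..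

lemma tK_Mm: "t > 0 \<Longrightarrow> t *\<^sub>R Kmat Q B t = Mm Q B t"
  by (simp add: Kmat_Mm)

lemma pos_def_nonzero: "pos_def (A::real^'n::finite^'n) \<Longrightarrow> A \<noteq> 0"
proof
  assume a: "pos_def A" "A = 0"
  have "(1::real^'n) \<noteq> 0" by (simp add: vec_eq_iff)
  then have "0 < (1::real^'n) \<bullet> (A *v 1)" using a(1) unfolding pos_def_def by blast
  then show False using a(2) by simp
qed

lemma bl_sandwich:
  fixes L R :: "real^'n::finite^'n"
  shows "bounded_linear (\<lambda>X. L ** X ** R)"
  unfolding linear_conv_bounded_linear[symmetric] linear_iff
proof (intro conjI allI)
  fix x y :: "real^'n^'n" and c :: real
  show "L ** (x + y) ** R = L ** x ** R + L ** y ** R"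
    by (simp add: matrix_add_ldistrib matrix_add_rdistrib')
  have "L ** (c *\<^sub>R x) = c *\<^sub>R (L ** x)" by (rule scaleR_matrix_mul_right)
  then show "L ** (c *\<^sub>R x) ** R = c *\<^sub>R (L ** x ** R)" by (simp add: scaleR_matrix_mul_left)
qed

lemma pd_psd: "pos_def A \<Longrightarrow> pos_semidef (A::real^'n::finite^'n)"
  unfolding pos_def_def pos_semidef_def by (metis inner_zero_left less_eq_real_def)

context
  fixes Q B :: "real^'n::finite^'n"
  assumes symQ: "transpose Q = Q" and H: "\<forall>t>0. pos_def (Kmat Q B t)"
begin

lemma Fm_integrable: "t > 0 \<Longrightarrow> Fm Q B integrable_on {0..t}"
proof (rule ccontr)
  assume "t > 0" "\<not> Fm Q B integrable_on {0..t}"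
  then have "Kmat Q B t = 0" by (simp add: Kmat_Mm Mm_def not_integrable_integral)
  with H \<open>t > 0\<close> pos_def_nonzero show False by blast
qed

lemma Mm_pd: "t > 0 \<Longrightarrow> pos_def (Mm Q B t)"
proof -
  assume t: "t > 0"
  have "pos_def (Kmat Q B t)" using H t by blast
  then show ?thesis
    using t unfolding pos_def_def tK_Mm[OF t, symmetric]
    by (simp add: scaleR_mv)
qed

lemma Fm_sym: "transpose (Fm Q B r) = Fm Q B r"
  by (simp add: Fm_def matrix_transpose_mul transpose_mat_exp transpose_scaleR symQ matrix_mul_assoc)

lemma Mm_sym: "t > 0 \<Longrightarrow> transpose (Mm Q B t) = Mm Q B t"
proof -
  assume t: "t > 0"
  have "transpose (Mm Q B t) = integral {0..t} (transpose \<circ> Fm Q B)"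
    unfolding Mm_def by (rule integral_linear[OF Fm_integrable[OF t] bl_transpose, symmetric])
  also have "transpose \<circ> Fm Q B = Fm Q B" by (rule ext) (simp add: Fm_sym)
  finally show ?thesis by (simp add: Mm_def)
qed

lemma Mm_split:
  assumes t: "t > 0"
  shows "Mm Q B t = Mm Q B (t/2) + mat_exp ((t/2) *\<^sub>R B) ** Mm Q B (t/2) ** transpose (mat_exp ((t/2) *\<^sub>R B))"
proof -
  let ?E = "mat_exp ((t/2) *\<^sub>R B)" and ?E' = "mat_exp ((t/2) *\<^sub>R transpose B)"
  have int: "Fm Q B integrable_on {0..t}" by (rule Fm_integrable[OF t])
  have "Mm Q B t = integral {0..t/2} (Fm Q B) + integral {t/2..t} (Fm Q B)"
    unfolding Mm_def using Henstock_Kurzweil_Integration.integral_combine[where a=0 and c="t/2" and b=t and f="Fm Q B"] int t by simp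
  moreover have "integral {t/2..t} (Fm Q B) = integral {0..t/2} (Fm Q B \<circ> (+) (t/2))"
  proof -
    have "Fm Q B integrable_on {t/2..t}" by (rule integrable_subinterval_real[OF int]) (use t in auto)
    then have "(Fm Q B has_integral integral {t/2..t} (Fm Q B)) {0 + t/2..t/2 + t/2}"
      by (simp add: integrable_integral)
    then have "((Fm Q B \<circ> (+) (t/2)) has_integral integral {t/2..t} (Fm Q B)) {0..t/2}"
      using has_integral_shift_Icc_real by blast
    then show ?thesis by (simp add: integral_unique)
  qed
  moreover have "Fm Q B \<circ> (+) (t/2) = (\<lambda>X. ?E ** X ** ?E') \<circ> Fm Q B"
  proof (rule ext)
    fix r
    have "mat_exp ((t/2 + r) *\<^sub>R B) = ?E ** mat_exp (r *\<^sub>R B)" by (rule mat_exp_shift)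
    moreover have "mat_exp ((t/2 + r) *\<^sub>R transpose B) = mat_exp (r *\<^sub>R transpose B) ** ?E'"
      using mat_exp_shift[of r "t/2" "transpose B"] by (simp add: add.commute)
    ultimately show "(Fm Q B \<circ> (+) (t/2)) r = ((\<lambda>X. ?E ** X ** ?E') \<circ> Fm Q B) r"
      by (simp add: Fm_def matrix_mul_assoc)
  qed
  moreover have "integral {0..t/2} ((\<lambda>X. ?E ** X ** ?E') \<circ> Fm Q B) = ?E ** Mm Q B (t/2) ** ?E'"
    unfolding Mm_def by (rule integral_linear[OF Fm_integrable bl_sandwich]) (use t in simp)
  ultimately show ?thesis by (simp add: Mm_def transpose_mat_exp transpose_scaleR)
qed


lemma Mm_det_bound:
  assumes t: "t > 0"
  shows "exp ((t/2) * trace B) * det (Mm Q B (t/2)) \<le> det (Mm Q B t)"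
proof -
  let ?M = "Mm Q B (t/2)" and ?E = "mat_exp ((t/2) *\<^sub>R B)"
  let ?P = "?E ** ?M ** transpose ?E"
  have t2: "t/2 > 0" using t by simp
  have Msym: "transpose ?M = ?M" by (rule Mm_sym[OF t2])
  have Mpd: "pos_def ?M" by (rule Mm_pd[OF t2])
  have Psym: "transpose ?P = ?P" using Msym by (simp add: matrix_transpose_mul matrix_mul_assoc)
  have dE: "det ?E = exp ((t/2) * trace B)" by (rule det_mat_exp)
  have injE: "inj ((*v) (transpose ?E))" using dE invertible_det_nz[of "transpose ?E"] inj_matrix_vector_mult by simp
  have Ppd: "pos_def ?P"
    unfolding pos_def_def
  proof (intro allI impI)
    fix x :: "real^'n" assume x: "x \<noteq> 0"
    have "transpose ?E *v x \<noteq> 0"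
    proof
      assume "transpose ?E *v x = 0"
      then have "transpose ?E *v x = transpose ?E *v 0" by (simp only: matrix_vector_mult_0_right)
      then have "x = 0" by (rule injD[OF injE])
      with x show False by simp
    qed
    then have "0 < (transpose ?E *v x) \<bullet> (?M *v (transpose ?E *v x))" using Mpd by (simp add: pos_def_def)
    also have "\<dots> = x \<bullet> (?P *v x)"
      by (simp add: inner_mv matrix_vector_mul_assoc[symmetric])
    finally show "0 < x \<bullet> (?P *v x)" .
  qed
  have split: "Mm Q B t = ?M + ?P" by (rule Mm_split[OF t])
  have d1: "det ?M \<le> det (Mm Q B t)"
    unfolding split by (rule det_mono[OF Msym Mpd Psym pd_psd[OF Ppd]])
  have d2: "det ?P \<le> det (Mm Q B t)"
    unfolding split using det_mono[OF Psym Ppd Msym pd_psd[OF Mpd]] by (simp add: add.commute)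
  have dP: "det ?P = exp ((t/2) * trace B) * exp ((t/2) * trace B) * det ?M"
    using dE by (simp add: det_mul)
  have dM: "det ?M > 0" by (rule det_pos[OF Msym Mpd])
  show ?thesis
  proof (cases "trace B \<ge> 0")
    case True
    then have "1 \<le> exp ((t/2) * trace B)" using t by simp
    have h: "exp ((t/2) * trace B) * det ?M \<le> exp ((t/2) * trace B) * exp ((t/2) * trace B) * det ?M"
      using mult_right_mono[OF \<open>1 \<le> exp ((t/2) * trace B)\<close>, of "exp ((t/2) * trace B) * det ?M"] dM
      by (simp add: mult_ac)
    have "exp ((t/2) * trace B) * exp ((t/2) * trace B) * det ?M \<le> det (Mm Q B t)"
      using d2 unfolding dP .
    with h show ?thesis by (rule order_trans)
  next
    case False
    then have "exp ((t/2) * trace B) \<le> 1" using t by (simp add: mult_nonneg_nonpos)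
    then have "exp ((t/2) * trace B) * det ?M \<le> det ?M" using dM by (simp add: mult_left_le_one_le)
    then show ?thesis using d1 by simp
  qed
qed

end



lemma matrix_inv_props: "invertible A \<Longrightarrow> A ** matrix_inv A = mat 1 \<and> matrix_inv A ** A = mat 1"
  unfolding invertible_def matrix_inv_def by (rule someI_ex)

lemma msq_nonneg:
  fixes K :: "real^'n::finite^'n"
  assumes sym: "transpose K = K" and pd: "pos_def K"
  shows "0 \<le> (matrix_inv K *v d) \<bullet> d"
proof -
  have "det K \<noteq> 0" using det_pos[OF sym pd] by simp
  then have inv: "invertible K" by (simp add: invertible_det_nz)
  define y where "y = matrix_inv K *v d"
  have "K *v y = d" using matrix_inv_props[OF inv] by (simp add: y_def matrix_vector_mul_assoc)
  then have "(matrix_inv K *v d) \<bullet> d = y \<bullet> (K *v y)" by (simp add: y_def)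
  also have "\<dots> \<ge> 0" using pd_psd[OF pd] by (simp add: pos_semidef_def)
  finally show ?thesis .
qed

lemma omega_pos: "omega TYPE('n::finite) > 0"
proof -
  have "ball (0::real^'n) 1 \<in> sets lborel" by simp
  then have "omega TYPE('n) = measure lborel (ball (0::real^'n) 1)" by (simp add: omega_def)
  also have "\<dots> > 0" by (rule content_ball_pos) simp
  finally show ?thesis .
qed

theorem lemma3p2:
  assumes "CARD('n) \<ge> 2"
  shows "\<exists>b>0. \<forall>(Q::real^'n^'n) (B::real^'n^'n).
     transpose Q = Q \<and> pos_semidef Q \<and> (\<forall>t>0. pos_def (Kmat Q B t)) \<longrightarrow>
     (\<forall>E t. E \<in> sets lebesgue \<and> emeasure lebesgue E < \<infinity> \<and> t > 0 \<longrightarrow>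
        ennreal (measure lebesgue E
           - b / Vfun Q B (t/2) * exp (- (t/4) * trace B) * (measure lebesgue E)\<^sup>2)
        \<le> (\<integral>\<^sup>+ X. ennreal \<bar>Pt Q B t (indicator E) X - indicator E X\<bar> \<partial>lebesgue))"
proof -
  define a where "a = (4 * pi) powr (- real CARD('n) / 2)"
  have a0: "a > 0" by (simp add: a_def)
  define b where "b = a * omega TYPE('n)"
  have b0: "b > 0" using a0 omega_pos[where 'n='n] by (simp add: b_def)
  show ?thesis
  proof (intro exI[of _ b] conjI b0 allI impI)
    fix Q B :: "real^'n^'n" and E :: "(real^'n) set" and t :: real
    assume hQ: "transpose Q = Q \<and> pos_semidef Q \<and> (\<forall>t>0. pos_def (Kmat Q B t))"
    assume hE: "E \<in> sets lebesgue \<and> emeasure lebesgue E < \<infinity> \<and> t > 0"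
    have symQ: "transpose Q = Q" and H: "\<forall>t>0. pos_def (Kmat Q B t)" using hQ by auto
    have Emeas: "E \<in> sets lebesgue" and Efin: "emeasure lebesgue E < \<infinity>" and t: "t > 0" using hE by auto
    define m where "m = measure lebesgue E"
    have m0: "m \<ge> 0" by (simp add: m_def)
    have t2: "t/2 > 0" using t by simp
    define d1 where "d1 = det (Mm Q B t)"
    define d2 where "d2 = det (Mm Q B (t/2))"
    have d1pos: "d1 > 0" unfolding d1_def by (rule det_pos[OF Mm_sym[OF symQ H t] Mm_pd[OF symQ H t]])
    have d2pos: "d2 > 0" unfolding d2_def by (rule det_pos[OF Mm_sym[OF symQ H t2] Mm_pd[OF symQ H t2]])
    have dbound: "exp ((t/2) * trace B) * d2 \<le> d1"
      unfolding d1_def d2_def by (rule Mm_det_bound[OF symQ H t])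
    define c where "c = a / sqrt d1"
    have c0: "c > 0" using a0 d1pos by (simp add: c_def)
    define b' where "b' = b / Vfun Q B (t/2) * exp (- (t/4) * trace B)"
    have V: "Vfun Q B (t/2) = omega TYPE('n) * sqrt d2"
      by (simp add: Vfun_def d2_def tK_Mm[OF t2])
    have cb: "c \<le> b'"
    proof -
      have e2: "exp ((t/2) * trace B) = (exp ((t/4) * trace B))^2"
        by (simp add: power2_eq_square exp_add[symmetric])
      have "sqrt (exp ((t/2) * trace B) * d2) \<le> sqrt d1" using dbound by simp
      then have s: "exp ((t/4) * trace B) * sqrt d2 \<le> sqrt d1"
        unfolding e2 by (simp add: real_sqrt_mult)
      have "b' = a / sqrt d2 * exp (- (t/4) * trace B)"
        using omega_pos[where 'n='n] by (simp add: b'_def V b_def)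
      also have "\<dots> = a / (exp ((t/4) * trace B) * sqrt d2)"
        by (simp add: exp_minus field_simps)
      also have "\<dots> \<ge> a / sqrt d1"
        using s a0 d2pos d1pos by (intro divide_left_mono) auto
      finally show ?thesis by (simp add: c_def)
    qed
    have Ksym: "transpose (Kmat Q B t) = Kmat Q B t"
      by (simp add: Kmat_Mm transpose_scaleR Mm_sym[OF symQ H t])
    have Kpd: "pos_def (Kmat Q B t)" using H t by blast
    have kb: "kernel Q B X Y t \<le> c" for X Y
    proof -
      have "msq Q B t X Y \<ge> 0" unfolding msq_def Let_def by (rule msq_nonneg[OF Ksym Kpd])
      then have "exp (- msq Q B t X Y / (4 * t)) \<le> 1" using t by simp
      moreover have "d1 powr (-1/2) = 1 / sqrt d1"
        using d1pos by (simp add: powr_minus_divide powr_half_sqrt)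
      moreover have "kernel Q B X Y t = a * d1 powr (-1/2) * exp (- msq Q B t X Y / (4 * t))"
        unfolding kernel_def a_def d1_def tK_Mm[OF t] ..
      ultimately have "kernel Q B X Y t = c * exp (- msq Q B t X Y / (4 * t))"
        "exp (- msq Q B t X Y / (4 * t)) \<le> 1" by (simp_all add: c_def)
      then show ?thesis using c0 by (simp add: mult_left_le)
    qed
    have k0: "kernel Q B X Y t \<ge> 0" for X Y by (simp add: kernel_def)
    have Pb: "Pt Q B t (indicator E) X \<le> c * m" for X
    proof (cases "integrable lebesgue (\<lambda>Y. kernel Q B X Y t * indicator E Y)")
      case True
      have "Pt Q B t (indicator E) X \<le> (\<integral>Y. c * indicator E Y \<partial>lebesgue)"
        unfolding Pt_def
      proof (rule integral_mono[OF True])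
        show "integrable lebesgue (\<lambda>Y. c * indicator E Y :: real)"
          using Emeas Efin by simp
        show "kernel Q B X Y t * indicator E Y \<le> c * indicator E Y" for Y
          using kb[of X Y] by (simp add: indicator_def)
      qed
      also have "\<dots> = c * m" by (simp add: m_def)
      finally show ?thesis .
    next
      case False
      then show ?thesis using c0 m0 by (simp add: Pt_def not_integrable_integral_eq)
    qed
    define r where "r = max 0 (1 - c * m)"
    have pt: "ennreal r * indicator E X \<le> ennreal \<bar>Pt Q B t (indicator E) X - indicator E X\<bar>" for X
    proof (cases "X \<in> E")
      case True
      have "r \<le> \<bar>Pt Q B t (indicator E) X - indicator E X\<bar>"
        using Pb[of X] True by (simp add: r_def)
      then show ?thesis using True by (simp add: ennreal_leI)
    qed simp
    have "(\<integral>\<^sup>+ X. ennreal r * indicator E X \<partial>lebesgue) \<le> (\<integral>\<^sup>+ X. ennreal \<bar>Pt Q B t (indicator E) X - indicator E X\<bar> \<partial>lebesgue)"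
      by (rule nn_integral_mono) (rule pt)
    moreover have "(\<integral>\<^sup>+ X. ennreal r * indicator E X \<partial>lebesgue) = ennreal (r * m)"
      using Emeas Efin by (simp add: nn_integral_cmult_indicator emeasure_eq_ennreal_measure m_def r_def ennreal_mult less_top)
    moreover have "m - b' * m\<^sup>2 \<le> r * m"
    proof -
      have "b' * m\<^sup>2 \<ge> c * m\<^sup>2" using cb by (simp add: mult_right_mono)
      then have "m - b' * m\<^sup>2 \<le> (1 - c * m) * m" by (simp add: power2_eq_square algebra_simps)
      also have "\<dots> \<le> r * m" using m0 by (simp add: r_def mult_right_mono)
      finally show ?thesis .
    qed
    ultimately show "ennreal (measure lebesgue E - b / Vfun Q B (t/2) * exp (- (t/4) * trace B) * (measure lebesgue E)\<^sup>2)
        \<le> (\<integral>\<^sup>+ X. ennreal \<bar>Pt Q B t (indicator E) X - indicator E X\<bar> \<partial>lebesgue)"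
      unfolding m_def[symmetric] b'_def[symmetric]
      by (metis ennreal_leI order_trans)
  qed
qed


end
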